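(* Let $s_n$ ($n\ge1$) be the number of nonempty-length canonical secondary structures on $[1,n]$, and let $S(z)=\sum_{n\ge1}s_nz^n$. Then in a neighborhood of $z=0$, $$S(z)=\frac{1-z-z^2+z^3-z^5-\sqrt{F(z)}}{2z^4},\qquad F(z)=4z^5(-1+z^2-z^4)+(-1+z+z^2-z^3+z^5)^2,$$ where the branch of the square root satisfies $\sqrt{F(0)}=1$. Equivalently, $S(z)$ together with the generating function $R(z)$ of the class $L_2=\{T : \text{the structure obtained by enclosing } T \text{ in one additional outer base pair is canonical}\}$ (counted by length of $T$) satisfies $$S=z+zS+z^2R+z^2SR,\qquad R=z^3+z^2R+z^4SR+z^3S.$$
   Context: A secondary structure on $[1,n]$ (with minimum hairpin size $\theta=1$) is a set $S$ of pairs $(i,j)$ of integers with $1\le i<j\le n$ such that: (i) there are no $(i,j),(k,\ell)\in S$ with $i<k<j<\ell$; (ii) every position of $[1,n]$ belongs to at most one pair of $S$; (iii) $j-i>1$ for every $(i,j)\in S$. Any position may pair with any other. A secondary structure is identified with its dot-bracket word over $\{\bullet,(,)\}$ (position $i$ is $\bullet$ if unpaired, $($ if paired with a larger position, $)$ if paired with a smaller position). A secondary structure $S$ is canonical if there is no $(i,j)\in S$ with both $(i-1,j+1)\notin S$ and $(i+1,j-1)\notin S$. "Enclosing $T$ in an outer base pair" means forming the word $(\,T\,)$ of length $|T|+2$. *)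

theory Defs
  imports Complex_Main "HOL-Computational_Algebra.Formal_Power_Series"
begin

definition secondary :: "nat \<Rightarrow> (nat \<times> nat) set \<Rightarrow> bool" where
  "secondary n S \<longleftrightarrow>
     (\<forall>(i,j)\<in>S. 1 \<le> i \<and> i < j \<and> j \<le> n) \<and>
     (\<forall>(i,j)\<in>S. \<forall>(k,l)\<in>S. \<not> (i < k \<and> k < j \<and> j < l)) \<and>
     (\<forall>(i,j)\<in>S. \<forall>(k,l)\<in>S. {i,j} \<inter> {k,l} \<noteq> {} \<longrightarrow> (i,j) = (k,l)) \<and>
     (\<forall>(i,j)\<in>S. j - i > 1)"

definition canonical :: "(nat \<times> nat) set \<Rightarrow> bool" where
  "canonical S \<longleftrightarrow> (\<forall>(i,j)\<in>S. (i - 1, j + 1) \<in> S \<or> (i + 1, j - 1) \<in> S)"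

definition enclose :: "nat \<Rightarrow> (nat \<times> nat) set \<Rightarrow> (nat \<times> nat) set" where
  "enclose n T = insert (1, n + 2) ((\<lambda>(i,j). (i + 1, j + 1)) ` T)"

definition num_canonical :: "nat \<Rightarrow> nat" where
  "num_canonical n = card {S. secondary n S \<and> canonical S}"

definition num_L2 :: "nat \<Rightarrow> nat" where
  "num_L2 n = card {T. secondary n T \<and> secondary (n + 2) (enclose n T) \<and> canonical (enclose n T)}"

definition S_fps :: "int fps" where
  "S_fps = Abs_fps (\<lambda>n. if n = 0 then 0 else int (num_canonical n))"

definition R_fps :: "int fps" where
  "R_fps = Abs_fps (\<lambda>n. int (num_L2 n))"

definition F_poly :: "complex \<Rightarrow> complex" where
  "F_poly z = 4 * z^5 * (-1 + z^2 - z^4) + (-1 + z + z^2 - z^3 + z^5)^2"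

end

theory Submission
  imports Defs "HOL-Analysis.FPS_Convergence"
begin


definition bnd :: "nat \<Rightarrow> nat \<Rightarrow> (nat\<times>nat) set \<Rightarrow> bool" where
  "bnd a b S \<longleftrightarrow> (\<forall>i j. (i,j)\<in>S \<longrightarrow> a \<le> i \<and> i+1 < j \<and> j \<le> b)"
definition ncr :: "(nat\<times>nat) set \<Rightarrow> bool" where
  "ncr S \<longleftrightarrow> (\<forall>i j k l. (i,j)\<in>S \<longrightarrow> (k,l)\<in>S \<longrightarrow> \<not> (i<k \<and> k<j \<and> j<l))"
definition djr :: "(nat\<times>nat) set \<Rightarrow> bool" where
  "djr S \<longleftrightarrow> (\<forall>i j k l. (i,j)\<in>S \<longrightarrow> (k,l)\<in>S \<longrightarrow> (i=k \<or> i=l \<or> j=k \<or> j=l) \<longrightarrow> i=k \<and> j=l)"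
definition str :: "nat \<Rightarrow> nat \<Rightarrow> (nat\<times>nat) set \<Rightarrow> bool" where
  "str a b S \<longleftrightarrow> bnd a b S \<and> ncr S \<and> djr S"
definition canx :: "(nat\<times>nat) set \<Rightarrow> (nat\<times>nat) set \<Rightarrow> bool" where
  "canx X S \<longleftrightarrow> (\<forall>(i,j)\<in>S. (i - 1, j + 1) \<in> S \<or> (i + 1, j - 1) \<in> S \<or> (i,j) \<in> X)"

lemma ball2_eq: "(\<forall>(i,j)\<in>S. \<forall>(k,l)\<in>S. P i j k l) \<longleftrightarrow> (\<forall>i j k l. (i,j)\<in>S \<longrightarrow> (k,l)\<in>S \<longrightarrow> P i j k l)"
  by fast

lemma ball1_eq: "(\<forall>(i,j)\<in>S. P i j) \<longleftrightarrow> (\<forall>i j. (i,j)\<in>S \<longrightarrow> P i j)"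
  by fast

lemma secondary_str: "secondary n S = str 1 n S"
proof -
  have e: "\<And>i j k l::nat. ({i,j} \<inter> {k,l} \<noteq> {} \<longrightarrow> (i,j) = (k,l)) \<longleftrightarrow> ((i=k \<or> i=l \<or> j=k \<or> j=l) \<longrightarrow> i=k \<and> j=l)"
    by auto
  have g: "\<And>i j::nat. ((1 \<le> i \<and> i<j \<and> j \<le> n) \<and> j - i > 1) = (1 \<le> i \<and> i+1<j \<and> j \<le> n)" by arith
  have h: "((\<forall>i j. (i,j)\<in>S \<longrightarrow> 1 \<le> i \<and> i<j \<and> j \<le> n) \<and> (\<forall>i j. (i,j)\<in>S \<longrightarrow> j - i > 1)) \<longleftrightarrow>
       (\<forall>i j. (i,j)\<in>S \<longrightarrow> ((1 \<le> i \<and> i<j \<and> j \<le> n) \<and> j - i > 1))" by blast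
  have f: "((\<forall>(i,j)\<in>S. 1 \<le> i \<and> i < j \<and> j \<le> n) \<and> (\<forall>(i,j)\<in>S. j - i > 1)) \<longleftrightarrow> bnd 1 n S"
    unfolding ball1_eq h g bnd_def ..
  show ?thesis unfolding secondary_def str_def ncr_def djr_def ball2_eq e using f by argo
qed

lemma canonical_canx: "canonical S = canx {} S"
  unfolding canonical_def canx_def by auto

lemma ncr_mono: "ncr S \<Longrightarrow> T \<subseteq> S \<Longrightarrow> ncr T" unfolding ncr_def by blast
lemma djr_mono: "djr S \<Longrightarrow> T \<subseteq> S \<Longrightarrow> djr T" unfolding djr_def by blast

lemma bndD: "bnd a b S \<Longrightarrow> (i,j) \<in> S \<Longrightarrow> a \<le> i \<and> i+1 < j \<and> j \<le> b" unfolding bnd_def by blast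

lemma str_subset:
  assumes "str a b S" "T \<subseteq> S" "\<And>i l. (i,l)\<in>T \<Longrightarrow> a' \<le> i \<and> l \<le> b'"
  shows "str a' b' T"
proof -
  have "bnd a' b' T" unfolding bnd_def
  proof (intro allI impI)
    fix i j assume "(i,j) \<in> T"
    then show "a' \<le> i \<and> i + 1 < j \<and> j \<le> b'" using assms(1,2) assms(3)[of i j] bndD[of a b S i j] unfolding str_def by blast
  qed
  then show ?thesis using assms(1,2) ncr_mono djr_mono unfolding str_def by blast
qed

lemma split1:
  assumes "a+2 \<le> c" "c \<le> b" "str (a+1) (c-1) S1" "str (c+1) b S2"
  shows "str a b (insert (a,c) (S1 \<union> S2))"
proof -
  let ?S = "insert (a,c) (S1 \<union> S2)"
  have b1: "\<And>i j. (i,j)\<in>S1 \<Longrightarrow> a+1 \<le> i \<and> i+1 < j \<and> j \<le> c-1" using assms(3) bndD unfolding str_def by blast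
  have b2: "\<And>i j. (i,j)\<in>S2 \<Longrightarrow> c+1 \<le> i \<and> i+1 < j \<and> j \<le> b" using assms(4) bndD unfolding str_def by blast
  have n1: "ncr S1" "djr S1" "ncr S2" "djr S2" using assms(3,4) unfolding str_def by auto
  have "bnd a b ?S" unfolding bnd_def
  proof (intro allI impI)
    fix i j assume "(i,j) \<in> ?S"
    then show "a \<le> i \<and> i + 1 < j \<and> j \<le> b" using b1[of i j] b2[of i j] assms(1,2) by auto
  qed
  moreover have "ncr ?S" unfolding ncr_def
  proof (intro allI impI)
    fix i j k l assume ij: "(i,j) \<in> ?S" and kl: "(k,l) \<in> ?S"
    show "\<not> (i<k \<and> k<j \<and> j<l)"
    proof
      assume h: "i<k \<and> k<j \<and> j<l"
      consider "(i,j) = (a,c)" | "(i,j)\<in>S1" | "(i,j)\<in>S2" using ij by blast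
      then show False
      proof cases
        case 1 then show False using h kl b1[of k l] b2[of k l] assms(1) by auto
      next
        case 2 note o = this
        consider "(k,l) = (a,c)" | "(k,l)\<in>S1" | "(k,l)\<in>S2" using kl by blast
        then show False
        proof cases
          case 1 then show False using h o b1[of i j] assms(1) by auto
        next
          case 3 then show False using h o b1[of i j] b2[of k l] assms(1) by auto
        qed (use 2 h n1 in \<open>unfold ncr_def, blast\<close>)
      next
        case 3 note o = this
        consider "(k,l) = (a,c)" | "(k,l)\<in>S1" | "(k,l)\<in>S2" using kl by blast
        then show False
        proof cases
          case 1 then show False using h o b2[of i j] assms(1) by auto
        next
          case 2 then show False using h o b2[of i j] b1[of k l] assms(1) by auto
        qed (use 3 h n1 in \<open>unfold ncr_def, blast\<close>)
      qed
    qed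
  qed
  moreover have "djr ?S" unfolding djr_def
  proof (intro allI impI)
    fix i j k l assume ij: "(i,j) \<in> ?S" and kl: "(k,l) \<in> ?S" and h: "i=k \<or> i=l \<or> j=k \<or> j=l"
    consider "(i,j) = (a,c)" | "(i,j)\<in>S1" | "(i,j)\<in>S2" using ij by blast
    then show "i = k \<and> j = l"
    proof cases
      case 1 then show ?thesis using h kl b1[of k l] b2[of k l] assms(1) by auto
    next
      case 2 note o = this
      consider "(k,l) = (a,c)" | "(k,l)\<in>S1" | "(k,l)\<in>S2" using kl by blast
      then show ?thesis
      proof cases
        case 1 then show ?thesis using h o b1[of i j] assms(1) by auto
      next
        case 3 then show ?thesis using h o b1[of i j] b2[of k l] assms(1) by auto
      qed (use 2 h n1 in \<open>unfold djr_def, blast\<close>)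
    next
      case 3 note o = this
      consider "(k,l) = (a,c)" | "(k,l)\<in>S1" | "(k,l)\<in>S2" using kl by blast
      then show ?thesis
      proof cases
        case 1 then show ?thesis using h o b2[of i j] assms(1) by auto
      next
        case 2 then show ?thesis using h o b2[of i j] b1[of k l] assms(1) by auto
      qed (use 3 h n1 in \<open>unfold djr_def, blast\<close>)
    qed
  qed
  ultimately show ?thesis unfolding str_def by blast
qed

lemma strD: assumes "str a b S"
  shows "\<And>i j. (i,j)\<in>S \<Longrightarrow> a \<le> i \<and> i+1 < j \<and> j \<le> b"
    "\<And>i j k l. (i,j)\<in>S \<Longrightarrow> (k,l)\<in>S \<Longrightarrow> i<k \<Longrightarrow> k<j \<Longrightarrow> j<l \<Longrightarrow> False"
    "\<And>i j k l. (i,j)\<in>S \<Longrightarrow> (k,l)\<in>S \<Longrightarrow> (i=k \<or> i=l \<or> j=k \<or> j=l) \<Longrightarrow> i=k \<and> j=l"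
proof -
  show "\<And>i j. (i,j)\<in>S \<Longrightarrow> a \<le> i \<and> i+1 < j \<and> j \<le> b" using assms unfolding str_def bnd_def by blast
  show "\<And>i j k l. (i,j)\<in>S \<Longrightarrow> (k,l)\<in>S \<Longrightarrow> i<k \<Longrightarrow> k<j \<Longrightarrow> j<l \<Longrightarrow> False"
    using assms unfolding str_def ncr_def by blast
  show "\<And>i j k l. (i,j)\<in>S \<Longrightarrow> (k,l)\<in>S \<Longrightarrow> (i=k \<or> i=l \<or> j=k \<or> j=l) \<Longrightarrow> i=k \<and> j=l"
    using assms unfolding str_def djr_def by (metis (no_types, lifting))
qed


lemma splitA:
  assumes "str a b S" "(a,c) \<in> S" "(i,l)\<in>S" "(i,l) \<noteq> (a,c)"
  shows "(a < i \<and> l < c) \<or> c < i"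
proof -
  note B = strD(1)[OF assms(1)]
  note il = assms(3,4)
    have "a \<noteq> i" using strD(3)[OF assms(1) il(1) assms(2)] il(2) by blast
    moreover have "i \<noteq> c" using strD(3)[OF assms(1) il(1) assms(2)] il(2) by blast
    moreover have "l \<noteq> c" using strD(3)[OF assms(1) il(1) assms(2)] il(2) by blast
    moreover have "\<not> (a < i \<and> i < c \<and> c < l)" using strD(2)[OF assms(1) assms(2) il(1)] by blast
    ultimately show "(a < i \<and> l < c) \<or> c < i" using B[OF il(1)] by linarith
qed
lemma split2:
  assumes "str a b S" "(a,c) \<in> S"
  shows "a+2 \<le> c" "c \<le> b" "str (a+1) (c-1) {p\<in>S. snd p < c}" "str (c+1) b {p\<in>S. c < fst p}"
    "S = insert (a,c) ({p\<in>S. snd p < c} \<union> {p\<in>S. c < fst p})"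
proof -
  note B = strD(1)[OF assms(1)]
  note A = splitA[OF assms]
  show "a+2 \<le> c" "c \<le> b" using B[OF assms(2)] by linarith+
  have s1: "{p\<in>S. snd p < c} \<subseteq> S" by blast
  have s2: "{p\<in>S. c < fst p} \<subseteq> S" by blast
  show "str (a+1) (c-1) {p\<in>S. snd p < c}"
  proof (rule str_subset[OF assms(1) s1])
    fix i l assume "(i,l) \<in> {p\<in>S. snd p < c}"
    then have il: "(i,l)\<in>S" "l < c" by auto
    have "(i,l) \<noteq> (a,c)" using il by blast
    with A[OF il(1)] B[OF il(1)] il(2) show "a + 1 \<le> i \<and> l \<le> c - 1" by linarith
  qed
  show "str (c+1) b {p\<in>S. c < fst p}"
  proof (rule str_subset[OF assms(1) s2])
    fix i l assume "(i,l) \<in> {p\<in>S. c < fst p}"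
    then have "(i,l)\<in>S" "c < i" by auto
    with B[of i l] show "c + 1 \<le> i \<and> l \<le> b" by linarith
  qed
  show "S = insert (a,c) ({p\<in>S. snd p < c} \<union> {p\<in>S. c < fst p})"
  proof
    show "S \<subseteq> insert (a,c) ({p\<in>S. snd p < c} \<union> {p\<in>S. c < fst p})"
    proof
      fix p assume p: "p \<in> S"
      obtain i l where pe: "p = (i,l)" by (cases p)
      show "p \<in> insert (a,c) ({p\<in>S. snd p < c} \<union> {p\<in>S. c < fst p})"
      proof (cases "p = (a,c)")
        case False
        then have "(a < i \<and> l < c) \<or> c < i" using A p pe by blast
        then show ?thesis using p pe by auto
      qed simp
    qed
    show "insert (a,c) ({p\<in>S. snd p < c} \<union> {p\<in>S. c < fst p}) \<subseteq> S" using assms(2) by blast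
  qed
qed

lemma split_inv:
  assumes "a+2 \<le> c" "str (a+1) (c-1) S1" "str (c+1) b S2"
  shows "{p\<in>insert (a,c) (S1 \<union> S2). snd p < c} = S1"
        "{p\<in>insert (a,c) (S1 \<union> S2). c < fst p} = S2"
proof -
  have b1: "\<And>p. p\<in>S1 \<Longrightarrow> a+1 \<le> fst p \<and> fst p < snd p \<and> snd p \<le> c-1"
  proof -
    fix p assume "p \<in> S1" then show "a+1 \<le> fst p \<and> fst p < snd p \<and> snd p \<le> c-1"
      using strD(1)[OF assms(2), of "fst p" "snd p"] by simp
  qed
  have b2: "\<And>p. p\<in>S2 \<Longrightarrow> c+1 \<le> fst p \<and> fst p < snd p"
  proof -
    fix p assume "p \<in> S2" then show "c+1 \<le> fst p \<and> fst p < snd p"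
      using strD(1)[OF assms(3), of "fst p" "snd p"] by simp
  qed
  show "{p\<in>insert (a,c) (S1 \<union> S2). snd p < c} = S1"
  proof (rule set_eqI)
    fix p show "p \<in> {p\<in>insert (a,c) (S1 \<union> S2). snd p < c} \<longleftrightarrow> p \<in> S1"
      using b1[of p] b2[of p] assms(1) by auto
  qed
  show "{p\<in>insert (a,c) (S1 \<union> S2). c < fst p} = S2"
  proof (rule set_eqI)
    fix p show "p \<in> {p\<in>insert (a,c) (S1 \<union> S2). c < fst p} \<longleftrightarrow> p \<in> S2"
      using b1[of p] b2[of p] assms(1) by auto
  qed
qed

lemma canx_split:
  assumes "1 \<le> a" "a+2 \<le> c" "str (a+1) (c-1) S1" "str (c+1) b S2" "X \<subseteq> {(a,b)}"
  shows "canx X (insert (a,c) (S1 \<union> S2)) \<longleftrightarrow>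
     ((a+1,c-1)\<in>S1 \<or> (a,c)\<in>X) \<and> canx {(a+1,c-1)} S1 \<and> canx {} S2"
proof -
  note b1 = strD(1)[OF assms(3)]
  note b2 = strD(1)[OF assms(4)]
  define S where "S = insert (a,c) (S1 \<union> S2)"
  have c1: "\<And>i l. (i,l)\<in>S1 \<Longrightarrow> ((i-1,l+1)\<in>S \<longleftrightarrow> (i-1,l+1)\<in>S1 \<or> (i,l) = (a+1,c-1))
      \<and> ((i+1,l-1)\<in>S \<longleftrightarrow> (i+1,l-1)\<in>S1) \<and> (i,l) \<notin> X"
  proof -
    fix i l assume "(i,l)\<in>S1"
    then have h: "a+1 \<le> i \<and> i+1<l \<and> l \<le> c-1" by (rule b1)
    have x1: "(i-1,l+1) \<notin> S2" using b2[of "i-1" "l+1"] h by linarith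
    have x2: "(i+1,l-1) \<notin> S2" using b2[of "i+1" "l-1"] h by linarith
    have x3: "(i+1,l-1) \<noteq> (a,c)" using h by simp
    have x4: "(i-1,l+1) = (a,c) \<longleftrightarrow> (i,l) = (a+1,c-1)" using h by auto
    have x5: "(i,l) \<notin> X" using assms(5) h by auto
    show "?thesis i l" unfolding S_def using x1 x2 x3 x4 x5 by auto
  qed
  have c2: "\<And>i l. (i,l)\<in>S2 \<Longrightarrow> ((i-1,l+1)\<in>S \<longleftrightarrow> (i-1,l+1)\<in>S2)
      \<and> ((i+1,l-1)\<in>S \<longleftrightarrow> (i+1,l-1)\<in>S2) \<and> (i,l) \<notin> X"
  proof -
    fix i l assume "(i,l)\<in>S2"
    then have h: "c+1 \<le> i \<and> i+1<l \<and> l \<le> b" by (rule b2)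
    have x1: "(i-1,l+1) \<notin> S1" using b1[of "i-1" "l+1"] h by linarith
    have x2: "(i+1,l-1) \<notin> S1" using b1[of "i+1" "l-1"] h by linarith
    have x3: "(i+1,l-1) \<noteq> (a,c)" "(i-1,l+1) \<noteq> (a,c)" using h assms(2) by auto
    have x5: "(i,l) \<notin> X" using assms(5,2) h by auto
    show "?thesis i l" unfolding S_def using x1 x2 x3 x5 by auto
  qed
  have c0: "(a-1,c+1) \<notin> S" "(a+1,c-1) \<in> S \<longleftrightarrow> (a+1,c-1) \<in> S1"
  proof -
    have "(a-1,c+1) \<notin> S1" using b1[of "a-1" "c+1"] assms(1) by linarith
    moreover have "(a-1,c+1) \<notin> S2" using b2[of "a-1" "c+1"] assms(1,2) by linarith
    moreover have "(a+1,c-1) \<notin> S2" using b2[of "a+1" "c-1"] assms(1,2) by linarith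
    ultimately show "(a-1,c+1) \<notin> S" "(a+1,c-1) \<in> S \<longleftrightarrow> (a+1,c-1) \<in> S1"
      unfolding S_def using assms(1,2) by auto
  qed
  define P where "P = (\<lambda>(i,l). (i-1,l+1)\<in>S \<or> (i+1,l-1)\<in>S \<or> (i,l)\<in>X)"
  have e1: "canx X S = (\<forall>p\<in>S. P p)" unfolding canx_def P_def by simp
  have e2: "(\<forall>p\<in>S. P p) = (P (a,c) \<and> (\<forall>p\<in>S1. P p) \<and> (\<forall>p\<in>S2. P p))" unfolding S_def by blast
  have e3: "P (a,c) = ((a+1,c-1)\<in>S1 \<or> (a,c)\<in>X)" unfolding P_def using c0 by simp
  have e4: "(\<forall>p\<in>S1. P p) = canx {(a+1,c-1)} S1" unfolding canx_def
  proof (intro ball_cong refl)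
    fix p assume "p \<in> S1"
    then obtain i l where p: "p = (i,l)" "(i,l)\<in>S1" by (cases p) auto
    show "P p = (case p of (i, j) \<Rightarrow> (i - 1, j + 1) \<in> S1 \<or> (i + 1, j - 1) \<in> S1 \<or> (i, j) \<in> {(a + 1, c - 1)})"
      unfolding p P_def using c1[OF p(2)] by auto
  qed
  have e5: "(\<forall>p\<in>S2. P p) = canx {} S2" unfolding canx_def
  proof (intro ball_cong refl)
    fix p assume "p \<in> S2"
    then obtain i l where p: "p = (i,l)" "(i,l)\<in>S2" by (cases p) auto
    show "P p = (case p of (i, j) \<Rightarrow> (i - 1, j + 1) \<in> S2 \<or> (i + 1, j - 1) \<in> S2 \<or> (i, j) \<in> {})"
      unfolding p P_def using c2[OF p(2)] by auto
  qed
  show ?thesis using e1 e2 e3 e4 e5 unfolding S_def by simp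
qed



definition sh :: "nat \<Rightarrow> (nat\<times>nat) set \<Rightarrow> (nat\<times>nat) set" where
  "sh k S = (\<lambda>(i,j). (i+k, j+k)) ` S"
definition unsh :: "nat \<Rightarrow> (nat\<times>nat) set \<Rightarrow> (nat\<times>nat) set" where
  "unsh k S = (\<lambda>(i,j). (i-k, j-k)) ` S"

lemma sh_mem: "(i+k, j+k) \<in> sh k S \<longleftrightarrow> (i,j) \<in> S"
  unfolding sh_def by auto

lemma sh_memE: "p \<in> sh k S \<Longrightarrow> (\<And>i j. p = (i+k,j+k) \<Longrightarrow> (i,j)\<in>S \<Longrightarrow> P) \<Longrightarrow> P"
  unfolding sh_def by auto

lemma sh_mem2: "(x,y) \<in> sh k S \<longleftrightarrow> k \<le> x \<and> k \<le> y \<and> (x-k,y-k) \<in> S"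
  unfolding sh_def by force

lemma str_sh: "str (a+k) (b+k) (sh k S) \<longleftrightarrow> str a b S"
proof -
  have "bnd (a+k) (b+k) (sh k S) \<longleftrightarrow> bnd a b S"
  proof
    assume h: "bnd (a+k) (b+k) (sh k S)"
    show "bnd a b S" unfolding bnd_def
    proof (intro allI impI)
      fix i j assume "(i,j)\<in>S"
      then have "(i+k,j+k) \<in> sh k S" by (simp add: sh_mem)
      from bndD[OF h this] show "a \<le> i \<and> i + 1 < j \<and> j \<le> b" by linarith
    qed
  next
    assume h: "bnd a b S"
    show "bnd (a+k) (b+k) (sh k S)" unfolding bnd_def
    proof (intro allI impI)
      fix x y assume "(x,y)\<in>sh k S"
      then obtain i j where "(x,y) = (i+k,j+k)" "(i,j)\<in>S" by (rule sh_memE)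
      with bndD[OF h this(2)] show "a+k \<le> x \<and> x + 1 < y \<and> y \<le> b+k" by simp
    qed
  qed
  moreover have "ncr (sh k S) \<longleftrightarrow> ncr S"
  proof
    assume h: "ncr (sh k S)"
    show "ncr S" unfolding ncr_def
    proof (intro allI impI)
      fix i j u v assume "(i,j)\<in>S" "(u,v)\<in>S"
      then have "(i+k,j+k) \<in> sh k S" "(u+k,v+k) \<in> sh k S" by (simp_all add: sh_mem)
      with h show "\<not> (i < u \<and> u < j \<and> j < v)" unfolding ncr_def by force
    qed
  next
    assume h: "ncr S"
    show "ncr (sh k S)" unfolding ncr_def
    proof (intro allI impI)
      fix x y x' y' assume a1: "(x,y)\<in>sh k S" and a2: "(x',y')\<in>sh k S"
      from a1 obtain i j where e1: "(x,y) = (i+k,j+k)" "(i,j)\<in>S" by (rule sh_memE)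
      from a2 obtain u v where e2: "(x',y') = (u+k,v+k)" "(u,v)\<in>S" by (rule sh_memE)
      have "\<not> (i < u \<and> u < j \<and> j < v)" using h e1(2) e2(2) unfolding ncr_def by blast
      then show "\<not> (x < x' \<and> x' < y \<and> y < y')" using e1(1) e2(1) by auto
    qed
  qed
  moreover have "djr (sh k S) \<longleftrightarrow> djr S"
  proof
    assume h: "djr (sh k S)"
    show "djr S" unfolding djr_def
    proof (intro allI impI)
      fix i j u v assume "(i,j)\<in>S" "(u,v)\<in>S" and o: "i = u \<or> i = v \<or> j = u \<or> j = v"
      then have "(i+k,j+k) \<in> sh k S" "(u+k,v+k) \<in> sh k S" by (simp_all add: sh_mem)
      moreover have "i+k = u+k \<or> i+k = v+k \<or> j+k = u+k \<or> j+k = v+k" using o by auto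
      ultimately have "i+k = u+k \<and> j+k = v+k" using h unfolding djr_def by blast
      then show "i = u \<and> j = v" by simp
    qed
  next
    assume h: "djr S"
    show "djr (sh k S)" unfolding djr_def
    proof (intro allI impI)
      fix x y x' y' assume a1: "(x,y)\<in>sh k S" and a2: "(x',y')\<in>sh k S" and o: "x = x' \<or> x = y' \<or> y = x' \<or> y = y'"
      from a1 obtain i j where e1: "(x,y) = (i+k,j+k)" "(i,j)\<in>S" by (rule sh_memE)
      from a2 obtain u v where e2: "(x',y') = (u+k,v+k)" "(u,v)\<in>S" by (rule sh_memE)
      have "i = u \<or> i = v \<or> j = u \<or> j = v" using o e1(1) e2(1) by auto
      then have "i = u \<and> j = v" using h e1(2) e2(2) unfolding djr_def by blast
      then show "x = x' \<and> y = y'" using e1(1) e2(1) by auto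
    qed
  qed
  ultimately show ?thesis unfolding str_def by blast
qed

lemma canx_alt: "canx X S \<longleftrightarrow> (\<forall>i j. (i,j)\<in>S \<longrightarrow> (i - 1, j + 1) \<in> S \<or> (i + 1, j - 1) \<in> S \<or> (i,j) \<in> X)"
  unfolding canx_def by fast

lemma all_sh: "(\<forall>x y. (x,y)\<in>sh k S \<longrightarrow> P x y) \<longleftrightarrow> (\<forall>i j. (i,j)\<in>S \<longrightarrow> P (i+k) (j+k))"
proof
  assume h: "\<forall>x y. (x,y)\<in>sh k S \<longrightarrow> P x y"
  show "\<forall>i j. (i,j)\<in>S \<longrightarrow> P (i+k) (j+k)"
  proof (intro allI impI)
    fix i j assume "(i,j)\<in>S"
    then have "(i+k,j+k)\<in>sh k S" by (simp add: sh_mem)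
    then show "P (i+k) (j+k)" using h by blast
  qed
next
  assume h: "\<forall>i j. (i,j)\<in>S \<longrightarrow> P (i+k) (j+k)"
  show "\<forall>x y. (x,y)\<in>sh k S \<longrightarrow> P x y"
  proof (intro allI impI)
    fix x y assume "(x,y)\<in>sh k S"
    then obtain i j where "(x,y) = (i+k,j+k)" "(i,j)\<in>S" by (rule sh_memE)
    then show "P x y" using h by auto
  qed
qed

lemma canx_sh:
  assumes "\<And>i j. (i,j)\<in>S \<Longrightarrow> 1 \<le> i \<and> i < j"
  shows "canx (sh k X) (sh k S) \<longleftrightarrow> canx X S"
  unfolding canx_alt all_sh
proof (intro all_cong1 imp_cong refl)
  fix i j assume "(i,j)\<in>S"
  then have h: "1 \<le> i" "i < j" using assms by auto
  have e1: "(i+k-1,j+k+1) = ((i-1)+k, (j+1)+k)" using h by simp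
  have e2: "(i+k+1,j+k-1) = ((i+1)+k, (j-1)+k)" using h by simp
  show "((i+k-1,j+k+1) \<in> sh k S \<or> (i+k+1, j+k-1) \<in> sh k S \<or> (i+k,j+k) \<in> sh k X) =
          ((i - 1, j + 1) \<in> S \<or> (i + 1, j - 1) \<in> S \<or> (i, j) \<in> X)"
    by (simp only: e1 e2 sh_mem)
qed

lemma sh_unsh: assumes h: "\<And>x y. (x,y)\<in>T \<Longrightarrow> k \<le> x \<and> k \<le> y" shows "sh k (unsh k T) = T"
proof (rule set_eqI)
  fix p :: "nat \<times> nat" obtain x y where p: "p = (x,y)" by (cases p)
  have "(x,y)\<in>sh k (unsh k T) \<longleftrightarrow> k \<le> x \<and> k \<le> y \<and> (x-k,y-k) \<in> unsh k T" by (rule sh_mem2)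
  also have "\<dots> \<longleftrightarrow> (x,y) \<in> T"
  proof
    assume a: "k \<le> x \<and> k \<le> y \<and> (x-k,y-k) \<in> unsh k T"
    then obtain u v where uv: "(u,v)\<in>T" "u-k = x-k" "v-k = y-k" unfolding unsh_def by auto
    with h[OF uv(1)] a have "u = x" "v = y" by auto
    then show "(x,y)\<in>T" using uv(1) by simp
  next
    assume a: "(x,y)\<in>T"
    then show "k \<le> x \<and> k \<le> y \<and> (x-k,y-k) \<in> unsh k T" using h[OF a] unfolding unsh_def by force
  qed
  finally show "p \<in> sh k (unsh k T) \<longleftrightarrow> p \<in> T" unfolding p .
qed

lemma inj_sh: "inj (sh k)"
proof -
  have "inj (\<lambda>(i::nat,j::nat). (i+k, j+k))" by (rule injI) auto
  then show ?thesis unfolding sh_def by (simp add: inj_def inj_image_eq_iff)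
qed

lemma sh_image:
  assumes "1 \<le> a"
  shows "{T. str (a+k) (b+k) T \<and> Q T} = sh k ` {S. str a b S \<and> Q (sh k S)}"
proof
  show "sh k ` {S. str a b S \<and> Q (sh k S)} \<subseteq> {T. str (a+k) (b+k) T \<and> Q T}"
    using str_sh by blast
  show "{T. str (a+k) (b+k) T \<and> Q T} \<subseteq> sh k ` {S. str a b S \<and> Q (sh k S)}"
  proof
    fix T assume T: "T \<in> {T. str (a+k) (b+k) T \<and> Q T}"
    have "\<And>x y. (x,y)\<in>T \<Longrightarrow> k \<le> x \<and> k \<le> y" using strD(1)[of "a+k" "b+k" T] T by fastforce
    then have e: "sh k (unsh k T) = T" by (rule sh_unsh)
    then have "str a b (unsh k T)" using T str_sh[of a k b "unsh k T"] by simp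
    then show "T \<in> sh k ` {S. str a b S \<and> Q (sh k S)}" using e T by (metis (mono_tags, lifting) image_eqI mem_Collect_eq)
  qed
qed

lemma card_sh:
  assumes "1 \<le> a"
  shows "card {T. str (a+k) (b+k) T \<and> Q T} = card {S. str a b S \<and> Q (sh k S)}"
  unfolding sh_image[OF assms] by (rule card_image) (rule inj_on_subset[OF inj_sh], simp)

definition Cs :: "nat \<Rightarrow> nat \<Rightarrow> (nat\<times>nat) set set" where
  "Cs a b = {S. str a b S \<and> canx {} S}"
definition Ws :: "nat \<Rightarrow> nat \<Rightarrow> (nat\<times>nat) set set" where
  "Ws a b = {S. str a b S \<and> canx {(a,b)} S}"
definition Ls :: "nat \<Rightarrow> nat \<Rightarrow> (nat\<times>nat) set set" where
  "Ls a b = {S. str a b S \<and> canx {(a,b)} S \<and> (a,b) \<in> S}"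

lemma str_ge1: "1 \<le> a \<Longrightarrow> str a b S \<Longrightarrow> (\<And>i j. (i,j)\<in>S \<Longrightarrow> 1 \<le> i \<and> i < j)"
  using strD(1) by fastforce

lemma sh_single: "sh k {(a,b)} = {(a+k,b+k)}" unfolding sh_def by simp
lemma sh_empty: "sh k {} = {}" unfolding sh_def by simp

lemma card_Cs_sh: "1 \<le> a \<Longrightarrow> card (Cs (a+k) (b+k)) = card (Cs a b)"
proof -
  assume a: "1 \<le> a"
  have ce: "\<And>S X. str a b S \<Longrightarrow> canx (sh k X) (sh k S) = canx X S"
    by (rule canx_sh, erule str_ge1[OF a])
  have "card (Cs (a+k) (b+k)) = card {S. str a b S \<and> canx {} (sh k S)}"
    unfolding Cs_def by (rule card_sh[OF a])
  also have "{S. str a b S \<and> canx {} (sh k S)} = Cs a b"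
    unfolding Cs_def using ce[of _ "{}"] by (auto simp: sh_empty)
  finally show ?thesis .
qed

lemma card_Ws_sh: "1 \<le> a \<Longrightarrow> card (Ws (a+k) (b+k)) = card (Ws a b)"
proof -
  assume a: "1 \<le> a"
  have ce: "\<And>S X. str a b S \<Longrightarrow> canx (sh k X) (sh k S) = canx X S"
    by (rule canx_sh, erule str_ge1[OF a])
  have "card (Ws (a+k) (b+k)) = card {S. str a b S \<and> canx {(a+k,b+k)} (sh k S)}"
    unfolding Ws_def by (rule card_sh[OF a])
  also have "{S. str a b S \<and> canx {(a+k,b+k)} (sh k S)} = Ws a b"
    unfolding Ws_def using ce[of _ "{(a,b)}"] by (auto simp: sh_single)
  finally show ?thesis .
qed

lemma card_Ls_sh: "1 \<le> a \<Longrightarrow> card (Ls (a+k) (b+k)) = card (Ls a b)"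
proof -
  assume a: "1 \<le> a"
  have ce: "\<And>S X. str a b S \<Longrightarrow> canx (sh k X) (sh k S) = canx X S"
    by (rule canx_sh, erule str_ge1[OF a])
  have "card (Ls (a+k) (b+k)) = card {S. str a b S \<and> (canx {(a+k,b+k)} (sh k S) \<and> (a+k,b+k) \<in> sh k S)}"
    unfolding Ls_def by (rule card_sh[OF a])
  also have "{S. str a b S \<and> (canx {(a+k,b+k)} (sh k S) \<and> (a+k,b+k) \<in> sh k S)} = Ls a b"
    unfolding Ls_def using ce[of _ "{(a,b)}"] by (auto simp: sh_single sh_mem)
  finally show ?thesis .
qed



lemma fin_str: "finite {S. str a b S \<and> P S}"
proof (rule finite_subset)
  show "{S. str a b S \<and> P S} \<subseteq> Pow ({a..b} \<times> {a..b})"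
  proof
    fix S assume "S \<in> {S. str a b S \<and> P S}"
    then have "str a b S" by simp
    then have "\<And>i j. (i,j)\<in>S \<Longrightarrow> a \<le> i \<and> i+1 < j \<and> j \<le> b" by (rule strD)
    then show "S \<in> Pow ({a..b} \<times> {a..b})" by fastforce
  qed
qed simp

lemma canx_mono: "X \<subseteq> Y \<Longrightarrow> canx X S \<Longrightarrow> canx Y S"
  unfolding canx_def by blast

lemma canx_unused: "canx X S \<Longrightarrow> X \<inter> S = {} \<Longrightarrow> canx {} S"
  unfolding canx_def by blast

lemma unpaired:
  assumes "X \<subseteq> {(a,b)}"
  shows "{S. str a b S \<and> canx X S \<and> (\<forall>c. (a,c)\<notin>S)} = Cs (a+1) b"
proof
  show "{S. str a b S \<and> canx X S \<and> (\<forall>c. (a,c)\<notin>S)} \<subseteq> Cs (a+1) b"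
  proof
    fix S assume S: "S \<in> {S. str a b S \<and> canx X S \<and> (\<forall>c. (a,c)\<notin>S)}"
    have st: "str a b S" using S by simp
    have st2: "str (a+1) b S"
    proof (rule str_subset[OF st])
      fix i l assume il: "(i,l)\<in>S"
      have "i \<noteq> a" using S il by auto
      then show "a + 1 \<le> i \<and> l \<le> b" using strD(1)[OF st il] by auto
    qed simp
    have "X \<inter> S = {}" using S assms by auto
    then have "canx {} S" using S canx_unused by blast
    then show "S \<in> Cs (a+1) b" unfolding Cs_def using st2 by simp
  qed
  show "Cs (a+1) b \<subseteq> {S. str a b S \<and> canx X S \<and> (\<forall>c. (a,c)\<notin>S)}"
  proof
    fix S assume S: "S \<in> Cs (a+1) b"
    have st: "str (a+1) b S" "canx {} S" using S unfolding Cs_def by auto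
    have "str a b S"
    proof (rule str_subset[OF st(1)])
      fix i l assume "(i,l)\<in>S" then show "a \<le> i \<and> l \<le> b" using strD(1)[OF st(1)] by fastforce
    qed simp
    moreover have "\<forall>c. (a,c)\<notin>S" using strD(1)[OF st(1)] by fastforce
    moreover have "canx X S" using canx_mono[OF _ st(2)] by blast
    ultimately show "S \<in> {S. str a b S \<and> canx X S \<and> (\<forall>c. (a,c)\<notin>S)}" by simp
  qed
qed

definition Fs :: "nat \<Rightarrow> nat \<Rightarrow> (nat\<times>nat) set \<Rightarrow> (nat\<times>nat) set set" where
  "Fs a c X = {S1. str (a+1) (c-1) S1 \<and> canx {(a+1,c-1)} S1 \<and> ((a+1,c-1)\<in>S1 \<or> (a,c)\<in>X)}"

definition jn :: "nat \<Rightarrow> nat \<Rightarrow> (nat\<times>nat) set \<times> (nat\<times>nat) set \<Rightarrow> (nat\<times>nat) set" where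
  "jn a c = (\<lambda>(S1,S2). insert (a,c) (S1 \<union> S2))"

lemma paired:
  assumes "1 \<le> a" "a+2 \<le> c" "c \<le> b" "X \<subseteq> {(a,b)}"
  shows "{S. str a b S \<and> canx X S \<and> (a,c)\<in>S} = jn a c ` (Fs a c X \<times> Cs (c+1) b)"
proof
  show "{S. str a b S \<and> canx X S \<and> (a,c)\<in>S} \<subseteq> jn a c ` (Fs a c X \<times> Cs (c+1) b)"
  proof
    fix S assume S: "S \<in> {S. str a b S \<and> canx X S \<and> (a,c)\<in>S}"
    then have st: "str a b S" "canx X S" "(a,c)\<in>S" by auto
    define S1 where "S1 = {p\<in>S. snd p < c}"
    define S2 where "S2 = {p\<in>S. c < fst p}"
    have s1: "str (a+1) (c-1) S1" unfolding S1_def by (rule split2(3)[OF st(1,3)])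
    have s2: "str (c+1) b S2" unfolding S2_def by (rule split2(4)[OF st(1,3)])
    have e: "S = insert (a,c) (S1 \<union> S2)" unfolding S1_def S2_def by (rule split2(5)[OF st(1,3)])
    have "((a+1,c-1)\<in>S1 \<or> (a,c)\<in>X) \<and> canx {(a+1,c-1)} S1 \<and> canx {} S2"
      using canx_split[OF assms(1,2) s1 s2 assms(4)] st(2) e by simp
    then have "(S1,S2) \<in> Fs a c X \<times> Cs (c+1) b" unfolding Fs_def Cs_def using s1 s2 by simp
    moreover have "S = jn a c (S1,S2)" unfolding jn_def using e by simp
    ultimately show "S \<in> jn a c ` (Fs a c X \<times> Cs (c+1) b)" by blast
  qed
  show "jn a c ` (Fs a c X \<times> Cs (c+1) b) \<subseteq> {S. str a b S \<and> canx X S \<and> (a,c)\<in>S}"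
  proof
    fix S assume "S \<in> jn a c ` (Fs a c X \<times> Cs (c+1) b)"
    then obtain S1 S2 where p: "S1 \<in> Fs a c X" "S2 \<in> Cs (c+1) b" "S = insert (a,c) (S1 \<union> S2)"
      unfolding jn_def by auto
    have s1: "str (a+1) (c-1) S1" and s2: "str (c+1) b S2" using p unfolding Fs_def Cs_def by auto
    have "str a b S" unfolding p(3) by (rule split1[OF assms(2,3) s1 s2])
    moreover have "canx X S" unfolding p(3) canx_split[OF assms(1,2) s1 s2 assms(4)]
      using p unfolding Fs_def Cs_def by auto
    ultimately show "S \<in> {S. str a b S \<and> canx X S \<and> (a,c)\<in>S}" unfolding p(3) by simp
  qed
qed

lemma paired_card:
  assumes "1 \<le> a" "a+2 \<le> c" "c \<le> b" "X \<subseteq> {(a,b)}"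
  shows "card {S. str a b S \<and> canx X S \<and> (a,c)\<in>S} = card (Fs a c X) * card (Cs (c+1) b)"
proof -
  have "inj_on (jn a c) (Fs a c X \<times> Cs (c+1) b)"
  proof (rule inj_onI)
    fix x y assume x: "x \<in> Fs a c X \<times> Cs (c+1) b" and y: "y \<in> Fs a c X \<times> Cs (c+1) b" and e: "jn a c x = jn a c y"
    obtain x1 x2 where xx: "x = (x1,x2)" by (cases x)
    obtain y1 y2 where yy: "y = (y1,y2)" by (cases y)
    have sx: "str (a+1) (c-1) x1" "str (c+1) b x2" using x xx unfolding Fs_def Cs_def by auto
    have sy: "str (a+1) (c-1) y1" "str (c+1) b y2" using y yy unfolding Fs_def Cs_def by auto
    have e': "insert (a,c) (x1 \<union> x2) = insert (a,c) (y1 \<union> y2)" using e xx yy unfolding jn_def by simp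
    have "x1 = y1" using split_inv(1)[OF assms(2) sx] split_inv(1)[OF assms(2) sy] e' by simp
    moreover have "x2 = y2" using split_inv(2)[OF assms(2) sx] split_inv(2)[OF assms(2) sy] e' by simp
    ultimately show "x = y" using xx yy by simp
  qed
  then have "card (jn a c ` (Fs a c X \<times> Cs (c+1) b)) = card (Fs a c X \<times> Cs (c+1) b)"
    by (rule card_image)
  then show ?thesis unfolding paired[OF assms] card_cartesian_product .
qed



lemma decomp_card:
  assumes "1 \<le> a" "X \<subseteq> {(a,b)}"
  shows "card {S. str a b S \<and> canx X S} = card (Cs (a+1) b) + (\<Sum>c=a+2..b. card (Fs a c X) * card (Cs (c+1) b))"
proof -
  let ?U = "{S. str a b S \<and> canx X S \<and> (\<forall>c. (a,c)\<notin>S)}"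
  let ?P = "\<lambda>c. {S. str a b S \<and> canx X S \<and> (a,c)\<in>S}"
  have e: "{S. str a b S \<and> canx X S} = ?U \<union> (\<Union>c\<in>{a+2..b}. ?P c)"
  proof
    show "{S. str a b S \<and> canx X S} \<subseteq> ?U \<union> (\<Union>c\<in>{a+2..b}. ?P c)"
    proof
      fix S assume S: "S \<in> {S. str a b S \<and> canx X S}"
      show "S \<in> ?U \<union> (\<Union>c\<in>{a+2..b}. ?P c)"
      proof (cases "\<exists>c. (a,c)\<in>S")
        case True
        then obtain c where c: "(a,c)\<in>S" by blast
        have "c \<in> {a+2..b}" using split2(1,2)[of a b S c] S c by simp
        then show ?thesis using S c by blast
      qed (use S in auto)
    qed
  qed blast
  have fin: "\<And>c. finite (?P c)" using fin_str by simp
  have finU: "finite ?U" using fin_str by simp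
  have d1: "?U \<inter> (\<Union>c\<in>{a+2..b}. ?P c) = {}" by blast
  have d2: "\<forall>c\<in>{a+2..b}. \<forall>c'\<in>{a+2..b}. c \<noteq> c' \<longrightarrow> ?P c \<inter> ?P c' = {}"
  proof (intro ballI impI)
    fix c c' :: nat assume "c \<noteq> c'"
    show "?P c \<inter> ?P c' = {}"
    proof (rule ccontr)
      assume "?P c \<inter> ?P c' \<noteq> {}"
      then obtain S where "str a b S" "(a,c)\<in>S" "(a,c')\<in>S" by blast
      then have "a = a \<and> c = c'" using strD(3) by blast
      then show False using \<open>c \<noteq> c'\<close> by simp
    qed
  qed
  have "card {S. str a b S \<and> canx X S} = card ?U + card (\<Union>c\<in>{a+2..b}. ?P c)"
    unfolding e by (rule card_Un_disjoint[OF finU _ d1]) (use fin in blast)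
  also have "card (\<Union>c\<in>{a+2..b}. ?P c) = (\<Sum>c=a+2..b. card (?P c))"
    by (rule card_UN_disjoint[OF _ _ d2]) (use fin in auto)
  also have "\<dots> = (\<Sum>c=a+2..b. card (Fs a c X) * card (Cs (c+1) b))"
    by (rule sum.cong[OF refl]) (rule paired_card[OF assms(1) _ _ assms(2)], auto)
  also have "card ?U = card (Cs (a+1) b)" using unpaired[OF assms(2)] by simp
  finally show ?thesis .
qed

definition cc :: "nat \<Rightarrow> nat" where "cc n = card (Cs 1 n)"
definition ll :: "nat \<Rightarrow> nat" where "ll n = card (Ls 1 n)"
definition ww :: "nat \<Rightarrow> nat" where "ww n = card (Ws 1 n)"

lemma card_Cs: "1 \<le> a \<Longrightarrow> a \<le> b + 1 \<Longrightarrow> card (Cs a b) = cc (b+1-a)"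
  using card_Cs_sh[of 1 "a-1" "b+1-a"] unfolding cc_def by simp
lemma card_Ls: "1 \<le> a \<Longrightarrow> a \<le> b + 1 \<Longrightarrow> card (Ls a b) = ll (b+1-a)"
  using card_Ls_sh[of 1 "a-1" "b+1-a"] unfolding ll_def by simp
lemma card_Ws: "1 \<le> a \<Longrightarrow> a \<le> b + 1 \<Longrightarrow> card (Ws a b) = ww (b+1-a)"
  using card_Ws_sh[of 1 "a-1" "b+1-a"] unfolding ww_def by simp

lemma cc0: "cc 0 = 1"
proof -
  have "Cs 1 0 = {{}}"
  proof
    show "Cs 1 0 \<subseteq> {{}}"
    proof
      fix S assume "S \<in> Cs 1 0"
      then have "str 1 0 S" unfolding Cs_def by simp
      then have "S = {}" using strD(1) by fastforce
      then show "S \<in> {{}}" by simp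
    qed
    show "{{}} \<subseteq> Cs 1 0" unfolding Cs_def str_def bnd_def ncr_def djr_def canx_def by simp
  qed
  then show ?thesis unfolding cc_def by simp
qed

lemma Fs_empty: "Fs a c {} = Ls (a+1) (c-1)"
  unfolding Fs_def Ls_def by auto

lemma R1: "1 \<le> n \<Longrightarrow> cc n = cc (n-1) + (\<Sum>c=3..n. ll (c-2) * cc (n-c))"
proof -
  assume n: "1 \<le> n"
  have "cc n = card {S. str 1 n S \<and> canx {} S}" unfolding cc_def Cs_def ..
  also have "\<dots> = card (Cs 2 n) + (\<Sum>c=3..n. card (Fs 1 c {}) * card (Cs (c+1) n))"
    using decomp_card[where a=1 and X="{}" and b=n] by (simp add: numeral_2_eq_2 numeral_3_eq_3)
  also have "card (Cs 2 n) = cc (n-1)" using card_Cs[of 2 n] n by simp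
  also have "(\<Sum>c=3..n. card (Fs 1 c {}) * card (Cs (c+1) n)) = (\<Sum>c=3..n. ll (c-2) * cc (n-c))"
    by (rule sum.cong[OF refl]) (auto simp: Fs_empty card_Ls card_Cs numeral_2_eq_2)
  finally show ?thesis .
qed

lemma R2: "ll n = (if 3 \<le> n then ww (n-2) else 0)"
proof (cases "3 \<le> n")
  case True
  have "Ls 1 n = {S. str 1 n S \<and> canx {(1,n)} S \<and> (1,n)\<in>S}" unfolding Ls_def ..
  then have "ll n = card (Fs 1 n {(1,n)}) * card (Cs (n+1) n)"
    unfolding ll_def using paired_card[of 1 n n "{(1,n)}"] True by simp
  also have "Fs 1 n {(1,n)} = Ws 2 (n-1)" unfolding Fs_def Ws_def by (auto simp: numeral_2_eq_2)
  also have "card (Ws 2 (n-1)) = ww (n-2)" using card_Ws[of 2 "n-1"] True by simp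
  also have "card (Cs (n+1) n) = 1" using card_Cs[of "n+1" n] cc0 by simp
  finally show ?thesis using True by simp
next
  case False
  have "Ls 1 n = {}" unfolding Ls_def using False strD(1)[of 1 n _ 1 n] by fastforce
  then show ?thesis using False unfolding ll_def by simp
qed

lemma R3: "ww n + (if 3 \<le> n then ll (n-2) else 0) = cc n + ll n"
proof -
  have u: "Ws 1 n = Cs 1 n \<union> Ls 1 n"
  proof
    show "Ws 1 n \<subseteq> Cs 1 n \<union> Ls 1 n"
    proof
      fix S assume S: "S \<in> Ws 1 n"
      show "S \<in> Cs 1 n \<union> Ls 1 n"
      proof (cases "(1,n) \<in> S")
        case False
        then have "{(1,n)} \<inter> S = {}" by simp
        then show ?thesis using S canx_unused unfolding Ws_def Cs_def by blast
      qed (use S in \<open>auto simp: Ws_def Ls_def\<close>)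
    qed
    show "Cs 1 n \<union> Ls 1 n \<subseteq> Ws 1 n" unfolding Ws_def Cs_def Ls_def using canx_mono by blast
  qed
  have i: "Cs 1 n \<inter> Ls 1 n = {S. str 1 n S \<and> canx {} S \<and> (1,n)\<in>S}"
    unfolding Cs_def Ls_def using canx_mono by blast
  have ci: "card (Cs 1 n \<inter> Ls 1 n) = (if 3 \<le> n then ll (n-2) else 0)"
  proof (cases "3 \<le> n")
    case True
    have "card (Cs 1 n \<inter> Ls 1 n) = card (Fs 1 n {}) * card (Cs (n+1) n)"
      unfolding i using paired_card[of 1 n n "{}"] True by simp
    also have "\<dots> = ll (n-2)" using card_Cs[of "n+1" n] cc0 card_Ls[of 2 "n-1"] True
      by (simp add: Fs_empty numeral_2_eq_2)
    finally show ?thesis using True by simp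
  next
    case False
    have "Cs 1 n \<inter> Ls 1 n = {}" unfolding i using False strD(1)[of 1 n _ 1 n] by fastforce
    then show ?thesis using False by simp
  qed
  have fC: "finite (Cs 1 n)" "finite (Ls 1 n)" unfolding Cs_def Ls_def using fin_str by auto
  have "card (Cs 1 n \<union> Ls 1 n) + card (Cs 1 n \<inter> Ls 1 n) = card (Cs 1 n) + card (Ls 1 n)"
    using card_Un_Int[OF fC] by simp
  then show ?thesis using ci u unfolding ww_def cc_def ll_def by simp
qed



lemma num_canonical_cc: "num_canonical n = cc n"
  unfolding num_canonical_def cc_def Cs_def secondary_str canonical_canx ..

lemma enclose_sh: "enclose n T = insert (1, n+2) (sh 1 T \<union> {})"
  unfolding enclose_def sh_def by simp

lemma str_empty: "str a b {}"
  unfolding str_def bnd_def ncr_def djr_def by simp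

lemma num_L2_ll: "num_L2 n = ll n"
proof -
  have "{T. secondary n T \<and> secondary (n + 2) (enclose n T) \<and> canonical (enclose n T)} = Ls 1 n"
  proof (cases "n = 0")
    case True
    have "\<not> secondary (n+2) (enclose n T)" for T
    proof
      assume "secondary (n+2) (enclose n T)"
      then have "str 1 (n+2) (enclose n T)" by (simp add: secondary_str)
      moreover have "(1,n+2) \<in> enclose n T" unfolding enclose_def by simp
      ultimately show False using strD(1) True by fastforce
    qed
    moreover have "Ls 1 0 = {}" unfolding Ls_def using strD(1)[of 1 0 _ 1 0] by auto
    ultimately show ?thesis using True by auto
  next
    case False
    show ?thesis
    proof (rule set_eqI)
      fix T
      show "T \<in> {T. secondary n T \<and> secondary (n + 2) (enclose n T) \<and> canonical (enclose n T)} \<longleftrightarrow> T \<in> Ls 1 n"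
      proof (cases "str 1 n T")
        case st: True
        have s1: "str (1+1) (n-1+2) (sh 1 T)" using st str_sh[of 1 1 n T] False by simp
        have s2: "str (n+2+1) (n+2) {}" by (rule str_empty)
        have e1: "secondary (n+2) (enclose n T)" unfolding secondary_str enclose_sh
          by (rule split1) (use False s1 s2 in auto)
        have ge: "\<And>i j. (i,j)\<in>T \<Longrightarrow> 1 \<le> i \<and> i < j" by (rule str_ge1[OF _ st]) simp
        have c1: "canonical (enclose n T) \<longleftrightarrow> ((1+1,n+2-1)\<in>sh 1 T \<or> (1,n+2)\<in>{}) \<and> canx {(1+1,n+2-1)} (sh 1 T) \<and> canx {} {}"
        proof -
          have s1': "str (1+1) (n+2-1) (sh 1 T)" using s1 False by (simp add: numeral_eq_Suc)
          have p1: "(1::nat) \<le> 1" "1 + 2 \<le> n+2" "{} \<subseteq> {(1::nat, n+2)}" using False by auto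
          note cs = canx_split[OF p1(1,2) s1' s2 p1(3)]
          show ?thesis unfolding canonical_canx enclose_sh using cs by simp
        qed
        have c2: "(((1+1,n+2-1)\<in>sh 1 T \<or> (1,n+2)\<in>{}) \<and> canx {(1+1,n+2-1)} (sh 1 T) \<and> canx {} {}) \<longleftrightarrow> (1,n) \<in> T \<and> canx {(1,n)} T"
        proof -
          have "(1+1,n+2-1)\<in>sh 1 T \<longleftrightarrow> (1,n)\<in>T" using sh_mem[of 1 1 n T] False by simp
          moreover have "canx {(1+1,n+2-1)} (sh 1 T) \<longleftrightarrow> canx {(1,n)} T"
            using canx_sh[OF ge, where k=1 and X="{(1,n)}"] False by (simp add: sh_single)
          moreover have "canx {} {}" unfolding canx_def by simp
          ultimately show ?thesis by simp
        qed
        show ?thesis using st e1 c1 c2 unfolding Ls_def secondary_str by auto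
      next
        case False
        then show ?thesis unfolding Ls_def secondary_str by auto
      qed
    qed
  qed
  then show ?thesis unfolding num_L2_def ll_def by simp
qed

lemma ll0: "ll 0 = 0" and ll1: "ll 1 = 0" and ll2: "ll 2 = 0" using R2 by auto

lemma R1': "2 \<le> n \<Longrightarrow> cc n = cc (n-1) + (\<Sum>i=0..n-2. ll i * cc (n-2-i))"
proof -
  assume n: "2 \<le> n"
  have "(\<Sum>c=3..n. ll (c-2) * cc (n-c)) = (\<Sum>i=1..n-2. ll i * cc (n-2-i))"
  proof -
    have e: "(1::nat)+2 = 3" "n-2+2 = n" using n by auto
    have "(\<Sum>c=3..n. ll (c-2) * cc (n-c)) = (\<Sum>c=1+2..(n-2)+2. ll (c-2) * cc (n-c))" by (simp only: e)
    also have "\<dots> = (\<Sum>i=1..n-2. ll (i+2-2) * cc (n-(i+2)))" by (rule sum.shift_bounds_cl_nat_ivl)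
    also have "\<dots> = (\<Sum>i=1..n-2. ll i * cc (n-2-i))" by (rule sum.cong) auto
    finally show ?thesis .
  qed
  also have "\<dots> = (\<Sum>i=0..n-2. ll i * cc (n-2-i))"
    using sum.atLeast_Suc_atMost[of 0 "n-2" "\<lambda>i. ll i * cc (n-2-i)"] ll0 by simp
  finally show ?thesis using R1[of n] n by simp
qed

lemma cc1: "cc 1 = 1" using R1[of 1] cc0 by simp
lemma cc1': "cc (Suc 0) = 1" using cc1 by simp

definition Cf :: "'a::comm_ring_1 fps" where "Cf = Abs_fps (\<lambda>n. of_nat (cc n))"
definition Rf :: "'a::comm_ring_1 fps" where "Rf = Abs_fps (\<lambda>n. of_nat (ll n))"
definition Sf :: "'a::comm_ring_1 fps" where "Sf = Abs_fps (\<lambda>n. if n = 0 then 0 else of_nat (cc n))"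

lemma Sf_Cf: "Sf = Cf - 1"
  by (rule fps_ext) (simp add: Sf_def Cf_def cc0)

lemma E1: "(Cf :: 'a::comm_ring_1 fps) = 1 + fps_X * Cf + fps_X^2 * (Rf * Cf)"
proof (rule fps_ext)
  fix n
  have x1: "fps_nth (fps_X * Cf :: 'a fps) n = (if n < 1 then 0 else of_nat (cc (n-1)))"
    using fps_X_power_mult_nth[of 1 "Cf :: 'a fps" n] by (simp add: Cf_def)
  have x2: "fps_nth (fps_X^2 * (Rf * Cf) :: 'a fps) n = (if n < 2 then 0 else of_nat (\<Sum>i=0..n-2. ll i * cc (n-2-i)))"
    using fps_X_power_mult_nth[of 2 "Rf * Cf :: 'a fps" n] by (simp add: fps_mult_nth Rf_def Cf_def)
  show "fps_nth (Cf :: 'a fps) n = fps_nth (1 + fps_X * Cf + fps_X^2 * (Rf * Cf)) n"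
  proof (cases "n \<ge> 2")
    case True
    then show ?thesis using x1 x2 R1'[OF True] by (simp add: Cf_def)
  next
    case False
    then consider "n = 0" | "n = 1" by linarith
    then show ?thesis using x1 x2 by cases (simp_all add: Cf_def cc0 cc1')
  qed
qed

lemma E2: "(Rf :: 'a::comm_ring_1 fps) + fps_X^4 * Rf = fps_X^2 * Sf + fps_X^2 * Rf"
proof (rule fps_ext)
  fix n
  have key: "ll n + (if n < 4 then 0 else ll (n-4)) = (if n < 2 then 0 else (if n - 2 = 0 then 0 else cc (n-2)) + ll (n-2))"
  proof -
    consider "n < 2" | "n = 2" | "n = 3" | "n = 4" | "5 \<le> n" by linarith
    then show ?thesis
    proof cases
      case 1 then show ?thesis using R2[of n] by simp
    next
      case 2 then show ?thesis using ll0 ll2 by simp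
    next
      case 3 then show ?thesis using R2[of 3] R3[of 1] ll1 by simp
    next
      case 4 then show ?thesis using R2[of 4] R3[of 2] ll0 ll2 by simp
    next
      case 5
      then obtain m where m: "n = m + 5" by (metis add.commute le_add_diff_inverse)
      show ?thesis using R2[of n] R3[of "n-2"] unfolding m by simp
    qed
  qed
  have "fps_nth ((Rf :: 'a fps) + fps_X^4 * Rf) n = of_nat (ll n + (if n < 4 then 0 else ll (n-4)))"
    using fps_X_power_mult_nth[of 4 "Rf :: 'a fps" n] by (simp add: Rf_def)
  also have "\<dots> = of_nat (if n < 2 then 0 else (if n - 2 = 0 then 0 else cc (n-2)) + ll (n-2))" using key by simp
  also have "\<dots> = fps_nth (fps_X^2 * Sf + fps_X^2 * Rf :: 'a fps) n"
    using fps_X_power_mult_nth[of 2 "Rf :: 'a fps" n] fps_X_power_mult_nth[of 2 "Sf :: 'a fps" n]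
    by (simp add: Rf_def Sf_def)
  finally show "fps_nth ((Rf :: 'a fps) + fps_X^4 * Rf) n = fps_nth (fps_X^2 * Sf + fps_X^2 * Rf :: 'a fps) n" .
qed

lemma S_eq: "(Sf :: 'a::comm_ring_1 fps) = fps_X + fps_X * Sf + fps_X^2 * Rf + fps_X^2 * Sf * Rf"
proof -
  have e: "Cf = (Sf :: 'a fps) + 1" using Sf_Cf by (metis diff_add_cancel)
  have "(Sf :: 'a fps) + 1 = 1 + fps_X * (Sf + 1) + fps_X^2 * (Rf * (Sf + 1))"
    using E1[where 'a='a] unfolding e .
  then show ?thesis by (simp add: algebra_simps)
qed

lemma R_eq: "(Rf :: 'a::comm_ring_1 fps) = fps_X^3 + fps_X^2 * Rf + fps_X^4 * Sf * Rf + fps_X^3 * Sf"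
proof -
  have h1: "(Sf :: 'a fps) - (fps_X + fps_X * Sf + fps_X^2 * Rf + fps_X^2 * Sf * Rf) = 0" using S_eq by simp
  have h2: "(Rf :: 'a fps) + fps_X^4 * Rf - (fps_X^2 * Sf + fps_X^2 * Rf) = 0" using E2 by simp
  have "(Rf :: 'a fps) - (fps_X^3 + fps_X^2 * Rf + fps_X^4 * Sf * Rf + fps_X^3 * Sf) =
     (Rf + fps_X^4 * Rf - (fps_X^2 * Sf + fps_X^2 * Rf)) + fps_X^2 * (Sf - (fps_X + fps_X * Sf + fps_X^2 * Rf + fps_X^2 * Sf * Rf))"
    by (simp add: algebra_simps power_add[symmetric] numeral_eq_Suc)
  then show ?thesis using h1 h2 by simp
qed

lemma quad: "fps_X^4 * (Sf :: 'a::comm_ring_1 fps)^2 + (fps_X - fps_X^3 + fps_X^5) = (1 - fps_X - fps_X^2 + fps_X^3 - fps_X^5) * Sf"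
proof -
  let ?X = "fps_X :: 'a fps"
  let ?S = "Sf :: 'a fps" let ?R = "Rf :: 'a fps"
  define P where "P = ?S - (?X + ?X * ?S + ?X^2 * ?R + ?X^2 * ?S * ?R)"
  define Q where "Q = ?R - (?X^3 + ?X^2 * ?R + ?X^4 * ?S * ?R + ?X^3 * ?S)"
  have P0: "P = 0" unfolding P_def using S_eq by simp
  have Q0: "Q = 0" unfolding Q_def using R_eq by simp
  have "(1 - ?X - ?X^2 + ?X^3 - ?X^5) * ?S - (?X^4 * ?S^2 + (?X - ?X^3 + ?X^5)) = P * (1 - ?X^2 - ?X^4 * ?S) + ?X^2 * (1 + ?S) * Q"
    unfolding P_def Q_def by (simp add: algebra_simps power_add[symmetric] numeral_eq_Suc)
  then show ?thesis using P0 Q0 by simp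
qed



lemma fs_sub:
  assumes S: "str a b S" and S': "str a' b' S'"
    and f1: "fst ` S \<subseteq> fst ` S'" and f2: "fst ` S' \<subseteq> fst ` S"
    and s1: "snd ` S \<subseteq> snd ` S'" and s2: "snd ` S' \<subseteq> snd ` S"
  shows "(i,j) \<in> S \<Longrightarrow> (i,j) \<in> S'"
proof (induction "j - i" arbitrary: i j rule: less_induct)
  case less
  note ij = less.prems
  have lt: "\<And>x y. (x,y)\<in>S \<Longrightarrow> x < y" using strD(1)[OF S] by fastforce
  have lt': "\<And>x y. (x,y)\<in>S' \<Longrightarrow> x < y" using strD(1)[OF S'] by fastforce
  have "i \<in> fst ` S'" using f1 ij by force
  then obtain j' where j': "(i,j')\<in>S'" by force
  show ?case
  proof (cases "j' = j")
    case True then show ?thesis using j' by simp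
  next
    case False
    then consider "j < j'" | "j' < j" by linarith
    then show ?thesis
    proof cases
      case 1
      have "j \<in> snd ` S'" using s1 ij by force
      then obtain i2 where i2: "(i2,j)\<in>S'" by force
      have "i2 \<noteq> i" using strD(3)[OF S' i2 j'] 1 by auto
      moreover have "\<not> i2 < i" using strD(2)[OF S' i2 j'] 1 lt[OF ij] by auto
      ultimately have ii2: "i < i2" "i2 < j" using lt'[OF i2] by auto
      have "i2 \<in> fst ` S" using f2 i2 by force
      then obtain j2 where j2: "(i2,j2)\<in>S" by force
      have "j2 \<noteq> j" using strD(3)[OF S j2 ij] ii2 by auto
      moreover have "\<not> j < j2" using strD(2)[OF S ij j2] ii2 by auto
      ultimately have "j2 < j" by linarith
      then have "j2 - i2 < j - i" using ii2 by linarith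
      then have "(i2,j2) \<in> S'" using less.hyps j2 by blast
      then have "j2 = j" using strD(3)[OF S' i2] by blast
      then show ?thesis using \<open>j2 \<noteq> j\<close> by simp
    next
      case 2
      have "j' \<in> snd ` S" using s2 j' by force
      then obtain i3 where i3: "(i3,j')\<in>S" by force
      have "i3 \<noteq> i" using strD(3)[OF S i3 ij] 2 by auto
      moreover have "\<not> i3 < i" using strD(2)[OF S i3 ij] 2 lt'[OF j'] by auto
      ultimately have ii3: "i < i3" "i3 < j'" using lt[OF i3] by auto
      then have "j' - i3 < j - i" using 2 by linarith
      then have "(i3,j') \<in> S'" using less.hyps i3 by blast
      then have "i3 = i" using strD(3)[OF S' _ j'] by blast
      then show ?thesis using \<open>i3 \<noteq> i\<close> by simp
    qed
  qed
qed

lemma card_bound: "card {S. str 1 n S \<and> P S} \<le> 4 ^ n"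
proof -
  let ?A = "{S. str 1 n S \<and> P S}"
  let ?f = "\<lambda>S. (fst ` S, snd ` S)"
  have "inj_on ?f ?A"
  proof (rule inj_onI)
    fix S S' assume "S \<in> ?A" "S' \<in> ?A" and e: "?f S = ?f S'"
    then have st: "str 1 n S" "str 1 n S'" by auto
    from e have e1: "fst ` S = fst ` S'" and e2: "snd ` S = snd ` S'" by auto
    have "S \<subseteq> S'" using fs_sub[OF st(1) st(2)] e1 e2 by auto
    moreover have "S' \<subseteq> S" using fs_sub[OF st(2) st(1)] e1 e2 by auto
    ultimately show "S = S'" by blast
  qed
  moreover have "?f ` ?A \<subseteq> Pow {1..n} \<times> Pow {1..n}"
  proof
    fix x assume "x \<in> ?f ` ?A"
    then obtain S where S: "str 1 n S" "x = ?f S" by auto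
    have "\<And>i j. (i,j)\<in>S \<Longrightarrow> 1 \<le> i \<and> i+1 < j \<and> j \<le> n" by (rule strD(1)[OF S(1)])
    then show "x \<in> Pow {1..n} \<times> Pow {1..n}" using S(2) by fastforce
  qed
  ultimately have "card ?A \<le> card (Pow {1..n::nat} \<times> Pow {1..n})"
    by (rule card_inj_on_le) simp
  also have "\<dots> = 4 ^ n" by (simp add: card_cartesian_product card_Pow power_mult_distrib[symmetric])
  finally show ?thesis .
qed

lemma cc_bound: "cc n \<le> 4 ^ n"
  unfolding cc_def Cs_def by (rule card_bound)



lemma Sf_nth: "fps_nth (Sf :: 'a::comm_ring_1 fps) n = (if n = 0 then 0 else of_nat (cc n))"
  unfolding Sf_def by simp

lemma Sf_norm: "norm (fps_nth (Sf :: complex fps) n) \<le> 4 ^ n"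
proof -
  have "real (cc n) \<le> 4 ^ n" using cc_bound[of n] by (metis of_nat_le_iff of_nat_numeral of_nat_power)
  then show ?thesis unfolding Sf_nth by simp
qed

lemma Sf_radius: "ereal (1/5) \<le> fps_conv_radius (Sf :: complex fps)"
proof -
  have "summable (\<lambda>n. fps_nth (Sf :: complex fps) n * (of_real (1/5)) ^ n)"
  proof (rule summable_comparison_test')
    show "summable (\<lambda>n. (4/5::real) ^ n)" by (rule summable_geometric) simp
    fix n :: nat
    have "norm (fps_nth (Sf :: complex fps) n * (of_real (1/5)) ^ n) = norm (fps_nth (Sf :: complex fps) n) * (1/5) ^ n"
      by (simp add: norm_mult norm_power)
    also have "\<dots> \<le> 4 ^ n * (1/5) ^ n" by (rule mult_right_mono[OF Sf_norm]) simp
    also have "\<dots> = (4/5) ^ n" by (simp add: power_divide)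
    finally show "norm (fps_nth (Sf :: complex fps) n * (of_real (1/5)) ^ n) \<le> (4/5) ^ n" .
  qed
  then have "norm (of_real (1/5) :: complex) \<le> conv_radius (fps_nth (Sf :: complex fps))"
    by (rule conv_radius_geI)
  then show ?thesis unfolding fps_conv_radius_def by simp
qed

lemma ok_mult: "ereal (norm z) < fps_conv_radius f \<Longrightarrow> ereal (norm z) < fps_conv_radius g \<Longrightarrow> ereal (norm z) < fps_conv_radius (f * g :: complex fps)"
  using fps_conv_radius_mult[of f g] by (meson min_less_iff_conj less_le_trans)
lemma ok_add: "ereal (norm z) < fps_conv_radius f \<Longrightarrow> ereal (norm z) < fps_conv_radius g \<Longrightarrow> ereal (norm z) < fps_conv_radius (f + g :: complex fps)"
  using fps_conv_radius_add[of f g] by (meson min_less_iff_conj less_le_trans)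
lemma ok_diff: "ereal (norm z) < fps_conv_radius f \<Longrightarrow> ereal (norm z) < fps_conv_radius g \<Longrightarrow> ereal (norm z) < fps_conv_radius (f - g :: complex fps)"
  using fps_conv_radius_diff[of f g] by (meson min_less_iff_conj less_le_trans)
lemma ok_power: "ereal (norm z) < fps_conv_radius f \<Longrightarrow> ereal (norm z) < fps_conv_radius (f ^ n :: complex fps)"
  using fps_conv_radius_power[of f n] by (meson less_le_trans)
lemma ok_X: "ereal (norm z) < fps_conv_radius (fps_X :: complex fps)" by simp
lemma ok_Xp: "ereal (norm z) < fps_conv_radius (fps_X ^ n :: complex fps)" by simp
lemma ok_1: "ereal (norm z) < fps_conv_radius (1 :: complex fps)" by simp

lemma ev_quad:
  fixes z :: complex
  assumes z: "norm z < 1/8"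
  shows "z^4 * (eval_fps Sf z)^2 + (z - z^3 + z^5) = (1 - z - z^2 + z^3 - z^5) * eval_fps Sf z"
proof -
  have r: "ereal (norm z) < fps_conv_radius (Sf :: complex fps)"
  proof -
    have "ereal (norm z) < ereal (1/5)" using z by simp
    then show ?thesis using Sf_radius by (rule less_le_trans)
  qed
  note oks = ok_mult ok_add ok_diff ok_power ok_X ok_Xp ok_1 r
  have "eval_fps (fps_X^4 * (Sf :: complex fps)^2 + (fps_X - fps_X^3 + fps_X^5)) z =
        eval_fps ((1 - fps_X - fps_X^2 + fps_X^3 - fps_X^5) * (Sf :: complex fps)) z"
    using quad[where 'a=complex] by simp
  moreover have "eval_fps (fps_X^4 * (Sf :: complex fps)^2 + (fps_X - fps_X^3 + fps_X^5)) z = z^4 * (eval_fps Sf z)^2 + (z - z^3 + z^5)"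
  proof -
    have a: "eval_fps (fps_X^4 * (Sf :: complex fps)^2 + (fps_X - fps_X^3 + fps_X^5)) z =
       eval_fps (fps_X^4 * (Sf :: complex fps)^2) z + eval_fps (fps_X - fps_X^3 + fps_X^5) z"
      by (rule eval_fps_add; intro ok_mult ok_add ok_diff ok_power ok_X ok_Xp ok_1 r)
    have b: "eval_fps (fps_X^4 * (Sf :: complex fps)^2) z = eval_fps (fps_X^4) z * eval_fps (Sf^2) z"
      by (rule eval_fps_mult; intro ok_mult ok_add ok_diff ok_power ok_X ok_Xp ok_1 r)
    have c: "eval_fps ((Sf :: complex fps)^2) z = (eval_fps Sf z)^2" by (rule eval_fps_power[OF r])
    have d: "eval_fps (fps_X - fps_X^3 + fps_X^5 :: complex fps) z = eval_fps (fps_X - fps_X^3) z + eval_fps (fps_X^5) z"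
      by (rule eval_fps_add; intro ok_mult ok_add ok_diff ok_power ok_X ok_Xp ok_1 r)
    have e: "eval_fps (fps_X - fps_X^3 :: complex fps) z = eval_fps fps_X z - eval_fps (fps_X^3) z"
      by (rule eval_fps_diff; intro ok_mult ok_add ok_diff ok_power ok_X ok_Xp ok_1 r)
    show ?thesis unfolding a b c d e by simp
  qed
  moreover have "eval_fps ((1 - fps_X - fps_X^2 + fps_X^3 - fps_X^5) * (Sf :: complex fps)) z = (1 - z - z^2 + z^3 - z^5) * eval_fps Sf z"
  proof -
    have a: "eval_fps ((1 - fps_X - fps_X^2 + fps_X^3 - fps_X^5) * (Sf :: complex fps)) z =
        eval_fps (1 - fps_X - fps_X^2 + fps_X^3 - fps_X^5 :: complex fps) z * eval_fps Sf z"
      by (rule eval_fps_mult; intro ok_mult ok_add ok_diff ok_power ok_X ok_Xp ok_1 r)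
    have b: "eval_fps (1 - fps_X - fps_X^2 + fps_X^3 - fps_X^5 :: complex fps) z =
       eval_fps (1 - fps_X - fps_X^2 + fps_X^3 :: complex fps) z - eval_fps (fps_X^5) z"
      by (rule eval_fps_diff; intro ok_mult ok_add ok_diff ok_power ok_X ok_Xp ok_1 r)
    have c: "eval_fps (1 - fps_X - fps_X^2 + fps_X^3 :: complex fps) z =
       eval_fps (1 - fps_X - fps_X^2 :: complex fps) z + eval_fps (fps_X^3) z"
      by (rule eval_fps_add; intro ok_mult ok_add ok_diff ok_power ok_X ok_Xp ok_1 r)
    have d: "eval_fps (1 - fps_X - fps_X^2 :: complex fps) z =
       eval_fps (1 - fps_X :: complex fps) z - eval_fps (fps_X^2) z"
      by (rule eval_fps_diff; intro ok_mult ok_add ok_diff ok_power ok_X ok_Xp ok_1 r)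
    have e: "eval_fps (1 - fps_X :: complex fps) z = eval_fps 1 z - eval_fps fps_X z"
      by (rule eval_fps_diff; intro ok_mult ok_add ok_diff ok_power ok_X ok_Xp ok_1 r)
    show ?thesis unfolding a b c d e by simp
  qed
  ultimately show ?thesis by simp
qed

lemma sigma_bound:
  fixes z :: complex
  assumes z: "norm z < 1/8"
  shows "norm (eval_fps Sf z) \<le> 2"
proof -
  have "norm (eval_fps Sf z) \<le> (\<Sum>n. (1/2::real)^n)"
    unfolding eval_fps_def
  proof (rule norm_suminf_le)
    show "summable (\<lambda>n. (1/2::real)^n)" by (rule summable_geometric) simp
    fix n
    have "norm (fps_nth (Sf :: complex fps) n * z ^ n) = norm (fps_nth (Sf :: complex fps) n) * norm z ^ n"
      by (simp add: norm_mult norm_power)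
    also have "\<dots> \<le> 4 ^ n * (1/8) ^ n"
      by (rule mult_mono[OF Sf_norm power_mono]) (use z in auto)
    also have "\<dots> = (1/2) ^ n" by (simp add: power_mult_distrib[symmetric])
    finally show "norm (fps_nth (Sf :: complex fps) n * z ^ n) \<le> (1/2) ^ n" .
  qed
  also have "(\<Sum>n. (1/2::real)^n) = 2" using suminf_geometric[of "1/2::real"] by simp
  finally show ?thesis .
qed

lemma main_analytic:
  fixes z :: complex
  assumes z0: "0 < norm z" and z: "norm z < 1/8"
  shows "(\<lambda>n. of_nat (if n = 0 then 0 else num_canonical n) * z ^ n) sums
              ((1 - z - z^2 + z^3 - z^5 - csqrt (F_poly z)) / (2 * z^4))"
proof -
  define \<sigma> where "\<sigma> = eval_fps (Sf :: complex fps) z"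
  define B where "B = 1 - z - z^2 + z^3 - z^5"
  define w where "w = B - 2 * z^4 * \<sigma>"
  have r: "ereal (norm z) < fps_conv_radius (Sf :: complex fps)"
  proof -
    have "ereal (norm z) < ereal (1/5)" using z by simp
    then show ?thesis using Sf_radius by (rule less_le_trans)
  qed
  have sm: "(\<lambda>n. fps_nth (Sf :: complex fps) n * z ^ n) sums \<sigma>" unfolding \<sigma>_def by (rule sums_eval_fps[OF r])
  have q: "z^4 * \<sigma>^2 + (z - z^3 + z^5) = B * \<sigma>" unfolding \<sigma>_def B_def by (rule ev_quad[OF z])
  have F: "F_poly z = B^2 - 4*z^4*(z - z^3 + z^5)" unfolding F_poly_def B_def by algebra
  have w2: "w^2 = B^2 - 4*z^4*(B*\<sigma> - z^4*\<sigma>^2)" unfolding w_def by algebra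
  have q': "B*\<sigma> - z^4*\<sigma>^2 = z - z^3 + z^5" using q by (metis add_diff_cancel_left')
  have ww: "w^2 = F_poly z" unfolding w2 F q' ..
  have sb: "norm \<sigma> \<le> 2" unfolding \<sigma>_def by (rule sigma_bound[OF z])
  define t where "t = norm z"
  have t: "0 \<le> t" "t < 1/8" using z unfolding t_def by auto
  have pk: "\<And>k. 1 \<le> k \<Longrightarrow> t^k \<le> t" using power_decreasing[of 1 _ t] t by simp
  have one_w: "1 - w = z + z^2 - z^3 + z^5 + 2*z^4*\<sigma>" unfolding w_def B_def by (simp add: algebra_simps)
  have n1: "norm (z + z^2 - z^3 + z^5 + 2*z^4*\<sigma>) \<le> norm z + norm (z^2) + norm (z^3) + norm (z^5) + norm (2*z^4*\<sigma>)"
    using norm_triangle_ineq[of "z + z^2 - z^3 + z^5" "2*z^4*\<sigma>"] norm_triangle_ineq[of "z + z^2 - z^3" "z^5"]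
      norm_triangle_ineq4[of "z + z^2" "z^3"] norm_triangle_ineq[of z "z^2"] by linarith
  have n2: "norm (2*z^4*\<sigma>) \<le> 4 * t" 
  proof -
    have "norm (2*z^4*\<sigma>) = 2 * t^4 * norm \<sigma>" unfolding t_def by (simp add: norm_mult norm_power)
    also have "\<dots> \<le> 2 * t * 2" using pk[of 4] sb t by (intro mult_mono) auto
    finally show ?thesis by simp
  qed
  have "norm (1 - w) < 1"
  proof -
    have "norm (1 - w) \<le> t + t^2 + t^3 + t^5 + 4 * t" using n1 n2 unfolding one_w t_def by (simp add: norm_power)
    also have "\<dots> \<le> 8 * t" using pk[of 2] pk[of 3] pk[of 5] by simp
    also have "\<dots> < 1" using t by simp
    finally show ?thesis .
  qed
  moreover have "Re (1 - w) \<le> norm (1 - w)" by (rule complex_Re_le_cmod)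
  ultimately have "0 < Re w" by simp
  then have cs: "csqrt (F_poly z) = w" using csqrt_unique[OF ww] by blast
  have z4: "z^4 \<noteq> 0" using z0 by auto
  have "(1 - z - z^2 + z^3 - z^5 - csqrt (F_poly z)) / (2 * z^4) = \<sigma>"
    unfolding cs w_def B_def using z4 by (simp add: field_simps)
  moreover have "(\<lambda>n. fps_nth (Sf :: complex fps) n * z ^ n) = (\<lambda>n. of_nat (if n = 0 then 0 else num_canonical n) * z ^ n)"
    by (auto simp: Sf_nth num_canonical_cc fun_eq_iff)
  ultimately show ?thesis using sm by simp
qed


theorem mainTheorem2:
  shows "(\<exists>r>0. \<forall>z::complex. 0 < norm z \<and> norm z < r \<longrightarrow>
            (\<lambda>n. of_nat (if n = 0 then 0 else num_canonical n) * z ^ n) sums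
              ((1 - z - z^2 + z^3 - z^5 - csqrt (F_poly z)) / (2 * z^4)))
         \<and> S_fps = fps_X + fps_X * S_fps + fps_X^2 * R_fps + fps_X^2 * S_fps * R_fps
         \<and> R_fps = fps_X^3 + fps_X^2 * R_fps + fps_X^4 * S_fps * R_fps + fps_X^3 * S_fps"
proof -
  have 1: "\<exists>r>0. \<forall>z::complex. 0 < norm z \<and> norm z < r \<longrightarrow>
            (\<lambda>n. of_nat (if n = 0 then 0 else num_canonical n) * z ^ n) sums
              ((1 - z - z^2 + z^3 - z^5 - csqrt (F_poly z)) / (2 * z^4))"
    by (rule exI[of _ "1/8"]) (auto intro: main_analytic)
  have 2: "S_fps = Sf"
    by (rule fps_ext) (simp add: S_fps_def Sf_def num_canonical_cc)
  have 3: "R_fps = Rf"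
    by (rule fps_ext) (simp add: R_fps_def Rf_def num_L2_ll)
  show ?thesis using 1 S_eq[where 'a=int] R_eq[where 'a=int] unfolding 2 3 by blast
qed

end
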